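(* Let $\bar L$ and $K$ be positive integers with $K\le \bar L/2$. Consider the following procedure producing, for $n=1,\dots,K$, a list of $n$ positive integers $L^{(n)}_1\le\cdots\le L^{(n)}_n$ (sorted ascending). For $n=1$: $L^{(1)}_1=2^{\lfloor\log_2\bar L\rfloor}$. For $n\ge2$: let $r^{(n-1)}=\bar L-\sum_{k=1}^{n-1}L^{(n-1)}_k$. If $r^{(n-1)}\ge L^{(n-1)}_{n-1}/2$, keep all previous lengths and add a new length $2^{\lfloor\log_2 r^{(n-1)}\rfloor}$; otherwise replace the largest length $L^{(n-1)}_{n-1}$ by two lengths each equal to $L^{(n-1)}_{n-1}/2$, keeping the others. Then sort the resulting $n$ lengths ascending to obtain $L^{(n)}_1\le\dots\le L^{(n)}_n$. Then the final lengths $L_k=L^{(K)}_k$, $k=1,\dots,K$, are all powers of $2$, satisfy $\sum_{k=1}^K L_k\le\bar L$, and maximize $\sum_{k=1}^K\lfloor\log_2 L_k\rfloor$ over all $K$-tuples of positive integers $(L_1,\dots,L_K)$ with $\sum_{k=1}^K L_k\le\bar L$.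
   Context: This procedure partitions (a truncation of) a dictionary matrix with $\bar L$ columns into $K$ subblocks of sizes $L_1,\dots,L_K$; in subblock sparse coding, the number of bits carried by the support is $\sum_{k=1}^K\lfloor\log_2 L_k\rfloor$. *)

theory Defs
  imports Complex_Main
begin

definition flog2 :: "nat \<Rightarrow> nat" where
  "flog2 x = nat \<lfloor>log 2 (real x)\<rfloor>"

definition subblock_step :: "nat \<Rightarrow> nat list \<Rightarrow> nat list" where
  "subblock_step Lbar Ls =
     (let r = Lbar - sum_list Ls; M = last Ls in
      if 2 * r \<ge> M then sort (Ls @ [2 ^ flog2 r])
      else sort (butlast Ls @ [M div 2, M div 2]))"

fun subblock_lengths :: "nat \<Rightarrow> nat \<Rightarrow> nat list" where
  "subblock_lengths Lbar 0 = []"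
| "subblock_lengths Lbar (Suc 0) = [2 ^ flog2 Lbar]"
| "subblock_lengths Lbar (Suc (Suc n)) = subblock_step Lbar (subblock_lengths Lbar (Suc n))"

end

theory Submission
  imports Defs
begin

lemma flog2_eq: "2^n \<le> x \<Longrightarrow> x < 2^(n+1) \<Longrightarrow> flog2 x = n"
  unfolding flog2_def using floor_log_nat_eq_if[of 2 n x] by simp

lemma flog2_bounds: assumes "0 < x" shows "2^flog2 x \<le> x \<and> x < 2^(Suc (flog2 x))"
proof -
  obtain n where "2^n \<le> x" "x < 2^(n+1)" using ex_power_ivl1[of 2 x] assms by auto
  then show ?thesis using flog2_eq[of n x] by simp
qed

lemma flog2_pow[simp]: "flog2 (2^n) = n"
  by (rule flog2_eq) auto

lemma flog2_pow2[simp]: "flog2 (2 * 2^n) = Suc n"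
  using flog2_pow[of "Suc n"] by simp

lemma sum_list_insort: "sum_list (insort (x::nat) xs) = x + sum_list xs"
  by (induction xs) auto

lemma sum_list_sort: "sum_list (sort (xs::nat list)) = sum_list xs"
  by (induction xs) (auto simp: sum_list_insort)

lemma elem_bound: assumes "0 < x" shows "flog2 x + 1 \<le> e + x div 2^e"
proof (cases "flog2 x < e")
  case True then show ?thesis by simp
next
  case False
  define f where "f = flog2 x"
  have "2^f \<le> x" using flog2_bounds[OF assms] f_def by simp
  hence "2^f div 2^e \<le> x div 2^e" by (rule div_le_mono)
  moreover have "2^f div (2::nat)^e = 2^(f-e)" using False f_def
    by (simp add: power_diff)
  moreover have "f - e < 2^(f-e)" by (rule less_exp)
  ultimately show ?thesis using False f_def by linarith
qed

lemma sum_div_le: "finite A \<Longrightarrow> (\<Sum>k\<in>A. (g k::nat) div d) \<le> (\<Sum>k\<in>A. g k) div d"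
proof (induction A rule: finite_induct)
  case empty then show ?case by simp
next
  case (insert a A)
  have "g a div d + (\<Sum>k\<in>A. g k) div d \<le> (g a + (\<Sum>k\<in>A. g k)) div d"
    using div_add1_eq[of "g a" "(\<Sum>k\<in>A. g k)" d] by linarith
  then show ?case using insert by simp
qed

definition inv :: "nat \<Rightarrow> nat \<Rightarrow> nat list \<Rightarrow> bool" where
  "inv Lbar n Ls \<longleftrightarrow> length Ls = n \<and> sorted Ls \<and> sum_list Ls \<le> Lbar \<and>
     (\<exists>e. (\<forall>x\<in>set Ls. x = 2^e \<or> x = 2^(Suc e)) \<and> Lbar - sum_list Ls < 2^e)"

lemma le_last: "sorted xs \<Longrightarrow> x \<in> set xs \<Longrightarrow> x \<le> last xs"
proof -
  assume s: "sorted xs" and x: "x \<in> set xs"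
  hence ne: "xs \<noteq> []" by auto
  have eq: "xs = butlast xs @ [last xs]" using ne by simp
  have "sorted (butlast xs @ [last xs])" using s eq by metis
  hence "\<forall>y\<in>set (butlast xs). y \<le> last xs" by (simp add: sorted_append)
  moreover have "x \<in> set (butlast xs) \<or> x = last xs" using x eq
    by (metis Un_iff empty_iff empty_set list.simps(15) set_append singletonD)
  ultimately show ?thesis by auto
qed

lemma step_inv:
  assumes I: "inv Lbar n Ls" and n: "0 < n" "n < Lbar"
  shows "inv Lbar (Suc n) (subblock_step Lbar Ls)"
proof -
  from I obtain e where L: "length Ls = n" and s: "sorted Ls" and sm: "sum_list Ls \<le> Lbar"
    and el: "\<forall>x\<in>set Ls. x = 2^e \<or> x = 2^(Suc e)" and r: "Lbar - sum_list Ls < 2^e"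
    unfolding inv_def by blast
  define R where "R = Lbar - sum_list Ls"
  define M where "M = last Ls"
  have ne: "Ls \<noteq> []" using L n by auto
  have Min: "M \<in> set Ls" using ne M_def by simp
  have Mmax: "\<forall>x\<in>set Ls. x \<le> M" using le_last[OF s] M_def by auto
  have Ldec: "Ls = butlast Ls @ [M]" using ne M_def by simp
  have sumdec: "sum_list Ls = sum_list (butlast Ls) + M"
    by (subst Ldec) simp
  show ?thesis
  proof (cases "2 * R \<ge> M")
    case True
    have Mp: "M = 2^e" using Min el True r R_def by fastforce
    have all: "\<forall>x\<in>set Ls. x = 2^e" using Mmax el Mp by fastforce
    have e1: "e \<ge> 1"
    proof (rule ccontr)
      assume "\<not> e \<ge> 1" hence "e = 0" by simp
      hence "R = 0" using r R_def by simp
      thus False using True Mp by simp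
    qed
    obtain d where d: "e = Suc d" using e1 by (cases e) auto
    have R1: "2^(e-1) \<le> R" using True Mp d by simp
    have R2: "R < 2^(e-1+1)" using r R_def e1 by simp
    have fl: "flog2 R = e - 1" using flog2_eq[OF R1 R2] .
    have stp: "subblock_step Lbar Ls = sort (Ls @ [2^(e-1)])"
      unfolding subblock_step_def Let_def using True fl R_def M_def by simp
    have sumLs: "sum_list Ls + 2^(e-1) \<le> Lbar" using R1 R_def sm by linarith
    have "Lbar - (sum_list Ls + 2^(e-1)) < 2^(e-1)" using R2 R_def by simp
    moreover have "\<forall>x\<in>set (Ls @ [2^(e-1)]). x = 2^(e-1) \<or> x = 2^(Suc (e-1))"
      using all e1 by auto
    ultimately show ?thesis unfolding inv_def stp using L sumLs
      by (auto simp: sum_list_sort)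
  next
    case False
    have stp: "subblock_step Lbar Ls = sort (butlast Ls @ [M div 2, M div 2])"
      unfolding subblock_step_def Let_def using False R_def M_def by simp
    have lenb: "length (butlast Ls) = n - 1" using L by simp
    have sb: "set (butlast Ls) \<subseteq> set Ls" by (simp add: in_set_butlastD subsetI)
    show ?thesis
    proof (cases "M = 2^(Suc e)")
      case True
      have "sum_list (butlast Ls @ [M div 2, M div 2]) = sum_list Ls"
        using sumdec True by simp
      moreover have "\<forall>x\<in>set (butlast Ls @ [M div 2, M div 2]). x = 2^e \<or> x = 2^(Suc e)"
        using el sb True by auto
      ultimately show ?thesis unfolding inv_def stp using L sm r n lenb
        by (auto simp: sum_list_sort)
    next
      case Mf: False
      have Mp: "M = 2^e" using Min el Mf by blast
      have all: "\<forall>x\<in>set Ls. x = 2^e" using Mmax el Mp by fastforce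
      have e1: "e \<ge> 1"
      proof (rule ccontr)
        assume "\<not> e \<ge> 1" hence "e = 0" by simp
        hence "R = 0" using r R_def by simp
        moreover have "sum_list Ls = n"
        proof -
          have "sum_list Ls = sum_list (map (\<lambda>_. 1) Ls)"
            using all \<open>e = 0\<close> by (metis map_idI power_0)
          thus ?thesis using L by (simp add: sum_list_triv)
        qed
        ultimately show False using n R_def sm by simp
      qed
      obtain d where d: "e = Suc d" using e1 by (cases e) auto
      have Md: "M div 2 = 2^(e-1)" using Mp d by simp
      have "sum_list (butlast Ls @ [M div 2, M div 2]) = sum_list Ls"
        using sumdec Md Mp d by simp
      moreover have "\<forall>x\<in>set (butlast Ls @ [M div 2, M div 2]). x = 2^(e-1) \<or> x = 2^(Suc (e-1))"
        using all sb Md e1 by auto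
      moreover have "Lbar - sum_list Ls < 2^(e-1)"
      proof -
        have "2 * R < 2 * 2^(e-1)" using False Mp d by simp
        thus ?thesis using R_def by simp
      qed
      ultimately show ?thesis unfolding inv_def stp using L sm n lenb
        by (auto simp: sum_list_sort)
    qed
  qed
qed

lemma all_inv: "1 \<le> n \<Longrightarrow> n \<le> Lbar \<Longrightarrow> inv Lbar n (subblock_lengths Lbar n)"
proof (induction n rule: subblock_lengths.induct)
  case (1 Lbar) then show ?case by simp
next
  case (2 Lbar)
  have b: "2^flog2 Lbar \<le> Lbar \<and> Lbar < 2^(Suc (flog2 Lbar))" using flog2_bounds 2 by simp
  show ?case unfolding inv_def
  proof (intro conjI)
    show "\<exists>e. (\<forall>x\<in>set (subblock_lengths Lbar (Suc 0)). x = 2^e \<or> x = 2^(Suc e)) \<and>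
          Lbar - sum_list (subblock_lengths Lbar (Suc 0)) < 2^e"
      by (rule exI[of _ "flog2 Lbar"]) (use b in auto)
  qed (use b in auto)
next
  case (3 Lbar n)
  have "inv Lbar (Suc n) (subblock_lengths Lbar (Suc n))" using 3 by simp
  from step_inv[OF this] 3 show ?case by simp
qed

lemma list_value:
  assumes "\<forall>x\<in>set Ls. x = 2^e \<or> x = 2^(Suc e)"
  shows "\<exists>q. sum_list Ls = 2^e * q \<and> sum_list (map flog2 Ls) + length Ls = length Ls * e + q"
  using assms
proof (induction Ls)
  case Nil then show ?case by simp
next
  case (Cons a Ls)
  then obtain q where q: "sum_list Ls = 2^e * q" "sum_list (map flog2 Ls) + length Ls = length Ls * e + q"
    by auto
  from Cons.prems have "a = 2^e \<or> a = 2^(Suc e)" by simp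
  then show ?case
  proof
    assume "a = 2^e" thus ?thesis using q by (intro exI[of _ "q+1"]) (simp add: algebra_simps)
  next
    assume "a = 2^(Suc e)" thus ?thesis using q by (intro exI[of _ "q+2"]) (simp add: algebra_simps)
  qed
qed

theorem mainTheorem2:
  fixes Lbar K :: nat
  assumes "0 < Lbar" and "0 < K" and "2 * K \<le> Lbar"
  defines "Ls \<equiv> subblock_lengths Lbar K"
  shows "length Ls = K
    \<and> (\<forall>k<K. \<exists>j. Ls ! k = 2 ^ j)
    \<and> sum_list Ls \<le> Lbar
    \<and> (\<forall>L :: nat \<Rightarrow> nat. (\<forall>k\<in>{1..K}. 0 < L k) \<and> (\<Sum>k=1..K. L k) \<le> Lbar
          \<longrightarrow> (\<Sum>k=1..K. flog2 (L k)) \<le> (\<Sum>k<K. flog2 (Ls ! k)))"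
proof -
  have "inv Lbar K Ls" unfolding Ls_def using all_inv assms by simp
  then obtain e where L: "length Ls = K" and sm: "sum_list Ls \<le> Lbar"
    and el: "\<forall>x\<in>set Ls. x = 2^e \<or> x = 2^(Suc e)" and r: "Lbar - sum_list Ls < 2^e"
    unfolding inv_def by blast
  obtain q where q: "sum_list Ls = 2^e * q" "sum_list (map flog2 Ls) + K = K * e + q"
    using list_value[OF el] L by auto
  have Ldiv: "Lbar div 2^e = q"
  proof -
    have "Lbar = 2^e * q + (Lbar - sum_list Ls)" using sm q by simp
    thus ?thesis using r
      by (metis add.commute div_mult_self2 div_less add_0 power_not_zero zero_neq_numeral mult.commute)
  qed
  have val: "(\<Sum>k<K. flog2 (Ls ! k)) = sum_list (map flog2 Ls)"
    using sum_list_sum_nth[of "map flog2 Ls"] L by (simp add: atLeast0LessThan)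
  have opt: "(\<Sum>k=1..K. flog2 (L k)) \<le> (\<Sum>k<K. flog2 (Ls ! k))"
    if p: "\<forall>k\<in>{1..K}. 0 < L k" and s: "(\<Sum>k=1..K. L k) \<le> Lbar" for L
  proof -
    have "(\<Sum>k=1..K. flog2 (L k) + 1) \<le> (\<Sum>k=1..K. e + L k div 2^e)"
      by (rule sum_mono) (use p elem_bound in auto)
    also have "\<dots> = K * e + (\<Sum>k=1..K. L k div 2^e)" by (simp add: sum.distrib)
    also have "\<dots> \<le> K * e + (\<Sum>k=1..K. L k) div 2^e" using sum_div_le[of "{1..K}" L] by simp
    also have "\<dots> \<le> K * e + Lbar div 2^e" using div_le_mono[OF s] by simp
    finally have a: "(\<Sum>k=1..K. flog2 (L k) + 1) \<le> K * e + q" using Ldiv by simp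
    have "(\<Sum>k=1..K. flog2 (L k) + 1) = (\<Sum>k=1..K. flog2 (L k)) + K"
      by (simp only: sum.distrib) simp
    hence "(\<Sum>k=1..K. flog2 (L k)) + K \<le> K * e + q" using a by simp
    thus ?thesis using q val by simp
  qed
  have pw: "\<forall>k<K. \<exists>j. Ls ! k = 2 ^ j" using el L by (metis nth_mem)
  show ?thesis using L sm pw opt by blast
qed

end
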